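(* Let $(I,d)$ and $(I',d')$ be Ptolemy segments. Let $x_1,x_3$ be the boundary points of $I$ and $x'_1,x'_3$ the boundary points of $I'$, and let $x_2$ be an inner point of $I$ and $x'_2$ an inner point of $I'$. Then there exists a unique Möbius homeomorphism $\phi:I\to I'$ with $\phi(x_i)=x'_i$ for $i=1,2,3$.
   Context: A Ptolemy segment is a compact interval $I\subset\mathbb{R}$ with a metric $d$ inducing its standard topology such that $d(x_1,x_3)d(x_2,x_4)=d(x_1,x_2)d(x_3,x_4)+d(x_1,x_4)d(x_3,x_2)$ whenever $x_1,x_2,x_3,x_4$ lie in this order on $I$. A quadruple is admissible if no entry occurs three or four times; the cross ratio triple is $\mathrm{crt}(x,y,z,w)=(d(x,y)d(z,w):d(x,z)d(y,w):d(x,w)d(y,z))\in\mathbb{R}P^2$. A map between metric spaces is Möbius if it is injective and preserves $\mathrm{crt}$ of all admissible quadruples. *)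

theory Defs
  imports "HOL-Analysis.Analysis"
begin

definition ptolemy_segment :: "real set \<Rightarrow> (real \<Rightarrow> real \<Rightarrow> real) \<Rightarrow> bool" where
  "ptolemy_segment I d \<longleftrightarrow>
     (\<exists>a b. a \<le> b \<and> I = {a..b}) \<and>
     Metric_space I d \<and>
     Metric_space.mtopology I d = top_of_set I \<and>
     (\<forall>x1 x2 x3 x4. x1 \<in> I \<longrightarrow> x2 \<in> I \<longrightarrow> x3 \<in> I \<longrightarrow> x4 \<in> I \<longrightarrow>
        x1 \<le> x2 \<longrightarrow> x2 \<le> x3 \<longrightarrow> x3 \<le> x4 \<longrightarrow>
        d x1 x3 * d x2 x4 = d x1 x2 * d x3 x4 + d x1 x4 * d x3 x2)"

definition admissible :: "'a \<Rightarrow> 'a \<Rightarrow> 'a \<Rightarrow> 'a \<Rightarrow> bool" where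
  "admissible x y z w \<longleftrightarrow>
     \<not> (x = y \<and> y = z) \<and> \<not> (x = y \<and> y = w) \<and>
     \<not> (x = z \<and> z = w) \<and> \<not> (y = z \<and> z = w)"

text \<open>Homogeneous coordinates of the cross ratio triple.\<close>

definition crt :: "('a \<Rightarrow> 'a \<Rightarrow> real) \<Rightarrow> 'a \<Rightarrow> 'a \<Rightarrow> 'a \<Rightarrow> 'a \<Rightarrow> real \<times> real \<times> real" where
  "crt d x y z w = (d x y * d z w, d x z * d y w, d x w * d y z)"

text \<open>Equality of points of RP^2 given by homogeneous coordinates.\<close>

definition proj_eq :: "real \<times> real \<times> real \<Rightarrow> real \<times> real \<times> real \<Rightarrow> bool" where
  "proj_eq u v \<longleftrightarrow> u \<noteq> (0, 0, 0) \<and> v \<noteq> (0, 0, 0) \<and>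
     (\<exists>t. t \<noteq> 0 \<and> fst v = t * fst u \<and> fst (snd v) = t * fst (snd u)
           \<and> snd (snd v) = t * snd (snd u))"

definition moebius :: "'a set \<Rightarrow> ('a \<Rightarrow> 'a \<Rightarrow> real) \<Rightarrow> 'b set \<Rightarrow> ('b \<Rightarrow> 'b \<Rightarrow> real)
                        \<Rightarrow> ('a \<Rightarrow> 'b) \<Rightarrow> bool" where
  "moebius M d M' d' f \<longleftrightarrow>
     f ` M \<subseteq> M' \<and> inj_on f M \<and>
     (\<forall>x\<in>M. \<forall>y\<in>M. \<forall>z\<in>M. \<forall>w\<in>M. admissible x y z w \<longrightarrow>
        proj_eq (crt d x y z w) (crt d' (f x) (f y) (f z) (f w)))"

end

theory Submission
  imports Defs
begin

locale PS =
  fixes I :: "real set" and d :: "real \<Rightarrow> real \<Rightarrow> real" and a b :: real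
  assumes pt: "ptolemy_segment I d" and ends: "{a,b} = {Inf I, Sup I}" and ab: "a \<noteq> b"
begin

lemma ms: "Metric_space I d" using pt by (simp add: ptolemy_segment_def)

sublocale Metric_space I d by (rule ms)

lemma topo: "mtopology = top_of_set I" using pt by (simp add: ptolemy_segment_def)

lemma H: "\<And>x1 x2 x3 x4. x1 \<in> I \<Longrightarrow> x2 \<in> I \<Longrightarrow> x3 \<in> I \<Longrightarrow> x4 \<in> I \<Longrightarrow>
        x1 \<le> x2 \<Longrightarrow> x2 \<le> x3 \<Longrightarrow> x3 \<le> x4 \<Longrightarrow>
        d x1 x3 * d x2 x4 = d x1 x2 * d x3 x4 + d x1 x4 * d x3 x2"
  using pt unfolding ptolemy_segment_def by blast

lemma seg: "\<exists>lo hi. lo < hi \<and> I = {lo..hi} \<and> ((a = lo \<and> b = hi) \<or> (a = hi \<and> b = lo))"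
proof -
  obtain lo hi where lh: "lo \<le> hi" "I = {lo..hi}" using pt unfolding ptolemy_segment_def by blast
  then have "Inf I = lo" "Sup I = hi" by auto
  with ends ab lh show ?thesis
    by (metis doubleton_eq_iff order_le_less)
qed

lemma aI: "a \<in> I" and bI: "b \<in> I"
  using seg by auto

lemma ptol_le:
  assumes "x \<in> I" "y \<in> I" "x \<le> y"
  shows "d x y * d a b = \<bar>d a y * d x b - d a x * d y b\<bar>"
proof -
  obtain lo hi where s: "lo < hi" "I = {lo..hi}" "(a = lo \<and> b = hi) \<or> (a = hi \<and> b = lo)"
    using seg by blast
  show ?thesis
  proof (cases "a = lo")
    case True
    then have "b = hi" using s ab by auto
    have "d a y * d x b = d a x * d y b + d a b * d y x"
      using H[of a x y b] assms s True \<open>b = hi\<close> by auto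
    moreover have "d y x = d x y" by (rule commute)
    moreover have "0 \<le> d a b * d x y" by simp
    ultimately show ?thesis by (simp add: algebra_simps)
  next
    case False
    then have ah: "a = hi" "b = lo" using s by auto
    have "d b y * d x a = d b x * d y a + d b a * d y x"
      using H[of b x y a] assms s ah by auto
    moreover have "d y x = d x y" "d b y = d y b" "d x a = d a x" "d b x = d x b" "d y a = d a y" "d b a = d a b"
      by (simp_all add: commute)
    moreover have "0 \<le> d a b * d x y" by simp
    ultimately show ?thesis by (simp add: algebra_simps)
  qed
qed

lemma ptol:
  assumes "x \<in> I" "y \<in> I"
  shows "d x y * d a b = \<bar>d a y * d x b - d a x * d y b\<bar>"
proof (cases "x \<le> y")
  case True then show ?thesis using ptol_le assms by blast
next
  case False
  then have "d y x * d a b = \<bar>d a x * d y b - d a y * d x b\<bar>" using ptol_le assms by auto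
  then show ?thesis by (simp add: commute abs_minus_commute)
qed

lemma cont: assumes "c \<in> I" shows "continuous_on I (\<lambda>x. d c x)"
proof -
  have MT: "Metric_space (UNIV::real set) dist"
    by (simp add: dist_commute dist_triangle Metric_space.intro)
  have "continuous_map mtopology (Metric_space.mtopology UNIV dist) (d c)"
    unfolding metric_continuous_map[OF MT]
  proof (intro conjI ballI allI impI)
    fix x :: real and e :: real assume "x \<in> I" "0 < e"
    show "\<exists>\<delta>>0. \<forall>y. y \<in> I \<and> d x y < \<delta> \<longrightarrow> dist (d c x) (d c y) < e"
    proof (intro exI[of _ e] conjI allI impI)
      fix y assume "y \<in> I \<and> d x y < e"
      then have "\<bar>d c x - d c y\<bar> \<le> d x y"
        using mdist_reverse_triangle[of x c y] assms \<open>x \<in> I\<close>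
        by (smt (verit) commute triangle)
      then show "dist (d c x) (d c y) < e" using \<open>y \<in> I \<and> d x y < e\<close> by (simp add: dist_real_def)
    qed (use \<open>0 < e\<close> in auto)
  qed auto
  then show ?thesis by (simp add: topo)
qed

lemma bdd: assumes "c \<in> I" shows "\<exists>B. \<forall>x\<in>I. d c x \<le> B"
proof -
  obtain lo hi where s: "I = {lo..hi}" using seg by blast
  have "compact ((\<lambda>x. d c x) ` I)"
    using compact_continuous_image[OF cont[OF assms]] s by auto
  then have "bounded ((\<lambda>x. d c x) ` I)" by (rule compact_imp_bounded)
  then obtain B where "\<forall>z\<in>(\<lambda>x. d c x) ` I. norm z \<le> B" by (auto simp: bounded_iff)
  then show ?thesis by auto
qed

lemma ivt: assumes "0 \<le> u" "0 \<le> v" shows "\<exists>x\<in>I. d a x * v = d x b * u"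
proof -
  obtain lo hi where s: "lo < hi" "I = {lo..hi}" "(a = lo \<and> b = hi) \<or> (a = hi \<and> b = lo)"
    using seg by blast
  define h where "h x = d a x * v - d x b * u" for x
  have ch: "continuous_on {lo..hi} h"
    unfolding h_def using s(2) cont[OF aI] cont[OF bI]
    by (intro continuous_intros) (auto simp: commute)
  have ha: "h a \<le> 0" using assms unfolding h_def by (simp add: aI)
  have hb: "h b \<ge> 0" using assms unfolding h_def by (simp add: bI)
  from s(3) show ?thesis
  proof
    assume "a = lo \<and> b = hi"
    then obtain x where "x \<ge> lo" "x \<le> hi" "h x = 0"
      using IVT'[of h lo 0 hi] ha hb ch s by auto
    then show ?thesis using s unfolding h_def by auto
  next
    assume "a = hi \<and> b = lo"
    then obtain x where "x \<ge> lo" "x \<le> hi" "h x = 0"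
      using IVT2'[of h hi 0 lo] ha hb ch s by auto
    then show ?thesis using s unfolding h_def by auto
  qed
qed

end



lemma L4: fixes Y Mb t X Q M Yb A Xb :: real
  assumes "Q \<noteq> 0" "M \<noteq> 0" "Y * Mb = t * (X * Q)" "M * Yb = t * (A * Xb)"
  shows "Y * (A * Mb / (Q * M) * Xb) = Yb * X"
proof -
  have "Y * (A * Mb / (Q * M) * Xb) = (Y * Mb) * A * Xb / (Q * M)" by simp
  also have "\<dots> = t * X * A * Xb / M" using assms by (simp add: field_simps)
  also have "\<dots> = (M * Yb) * X / M" using assms(4) by (simp add: field_simps)
  also have "\<dots> = Yb * X" using assms(2) by simp
  finally show ?thesis .
qed

lemma L1: fixes a b c e k D D' p q :: real
  shows "(a*b*k*D/D' * p) * (c*e*k*D/D' * q) = a*b*c*e*(k*D/D')^2 * (p*q)"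
  by (simp add: power2_eq_square)
lemma cross2:
  fixes v1 v2 p1 q1 p2 q2 :: real
  assumes "v1 \<noteq> 0 \<or> v2 \<noteq> 0" "p1 * v2 = q1 * v1" "p2 * v2 = q2 * v1"
  shows "p1 * q2 - p2 * q1 = 0"
proof (cases "v1 = 0")
  case True
  then have "v2 \<noteq> 0" using assms by auto
  then show ?thesis using assms True by simp
next
  case False
  have "(p1 * q2 - p2 * q1) * v1 = p1 * (q2 * v1) - p2 * (q1 * v1)" by (simp add: algebra_simps)
  also have "\<dots> = p1 * (p2 * v2) - p2 * (p1 * v2)" using assms(2,3) by simp
  also have "\<dots> = 0" by simp
  finally show ?thesis using False by simp
qed
lemma crt_nz:
  assumes "Metric_space M d" "x \<in> M" "y \<in> M" "z \<in> M" "w \<in> M" "admissible x y z w"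
  shows "crt d x y z w \<noteq> (0,0,0)"
proof -
  interpret Metric_space M d by fact
  show ?thesis using assms(2-6) unfolding crt_def admissible_def
    by (auto simp: commute)
qed

theorem theorem3p1:
  fixes I I' :: "real set" and d d' :: "real \<Rightarrow> real \<Rightarrow> real"
    and x1 x2 x3 x1' x2' x3' :: real
  assumes "ptolemy_segment I d" and "ptolemy_segment I' d'"
    and "{x1, x3} = {Inf I, Sup I}" and "x1 \<noteq> x3"
    and "{x1', x3'} = {Inf I', Sup I'}" and "x1' \<noteq> x3'"
    and "x2 \<in> I - {x1, x3}" and "x2' \<in> I' - {x1', x3'}"
  shows "\<exists>\<phi>. (homeomorphic_map (Metric_space.mtopology I d) (Metric_space.mtopology I' d') \<phi>
              \<and> moebius I d I' d' \<phi> \<and> \<phi> x1 = x1' \<and> \<phi> x2 = x2' \<and> \<phi> x3 = x3')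
           \<and> (\<forall>\<psi>. homeomorphic_map (Metric_space.mtopology I d) (Metric_space.mtopology I' d') \<psi>
                 \<and> moebius I d I' d' \<psi> \<and> \<psi> x1 = x1' \<and> \<psi> x2 = x2' \<and> \<psi> x3 = x3'
                 \<longrightarrow> (\<forall>x\<in>I. \<psi> x = \<phi> x))"
proof -
  interpret A: PS I d x1 x3 using assms by (simp add: PS_def)
  interpret B: PS I' d' x1' x3' using assms by (simp add: PS_def)
  have a: "x1 \<in> I" "x3 \<in> I" "x2 \<in> I" "x2 \<noteq> x1" "x2 \<noteq> x3"
    using A.aI A.bI assms(7) by auto
  have a': "x1' \<in> I'" "x3' \<in> I'" "x2' \<in> I'" "x2' \<noteq> x1'" "x2' \<noteq> x3'"
    using B.aI B.bI assms(8) by auto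
  define D where "D = d x1 x3"
  define D' where "D' = d' x1' x3'"
  have Dp: "D > 0" "D' > 0" using a a' assms(4,6) by (auto simp: D_def D'_def)
  define k where "k = d x1 x2 * d' x2' x3' / (d x2 x3 * d' x1' x2')"
  have kp: "k > 0" unfolding k_def using a a' by (auto simp: A.commute B.commute)
  define R where "R x y \<longleftrightarrow> y \<in> I' \<and> d' x1' y * (k * d x x3) = d' y x3' * d x1 x" for x y
  have E: "\<exists>y. R x y" if "x \<in> I" for x
    using B.ivt[of "d x1 x" "k * d x x3"] kp unfolding R_def by auto
  have U: "y1 = y2" if "x \<in> I" "R x y1" "R x y2" for x y1 y2
  proof -
    have "d x1 x \<noteq> 0 \<or> k * d x x3 \<noteq> 0"
      using that(1) a assms(4) kp by auto
    then have "d' x1' y1 * d' y2 x3' - d' x1' y2 * d' y1 x3' = 0"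
      using cross2[of "d x1 x" "k * d x x3" "d' x1' y1" "d' y1 x3'" "d' x1' y2" "d' y2 x3'"] that
      unfolding R_def by simp
    then have "d' y2 y1 * D' = 0" using B.ptol[of y2 y1] that unfolding R_def D'_def by simp
    then show ?thesis using Dp that unfolding R_def by simp
  qed
  define \<phi> where "\<phi> x = (SOME y. R x y)" for x
  have R\<phi>: "R x (\<phi> x)" if "x \<in> I" for x
    unfolding \<phi>_def using E[OF that] by (rule someI_ex)
  have \<phi>eq: "\<phi> x = y" if "x \<in> I" "R x y" for x y
    using U[OF that(1) R\<phi>[OF that(1)] that(2)] .
  have \<phi>I: "\<phi> x \<in> I'" if "x \<in> I" for x using R\<phi>[OF that] unfolding R_def by simp
  define \<mu> where "\<mu> x = (d' x1' (\<phi> x) + d' (\<phi> x) x3') / (d x1 x + k * d x x3)" for x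
  have sp: "d x1 x + k * d x x3 > 0" if "x \<in> I" for x
  proof (cases "x = x1")
    case True then show ?thesis using that a assms(4) kp by simp
  next
    case False
    then have "d x1 x > 0" using that a by simp
    moreover have "k * d x x3 \<ge> 0" using kp by simp
    ultimately show ?thesis by linarith
  qed
  have \<mu>p: "\<mu> x > 0" if "x \<in> I" for x
  proof -
    have "d' x1' (\<phi> x) + d' (\<phi> x) x3' > 0"
    proof (cases "\<phi> x = x1'")
      case True then show ?thesis using a' assms(6) by simp
    next
      case False
      then have "d' x1' (\<phi> x) > 0" using \<phi>I[OF that] a' by simp
      moreover have "d' (\<phi> x) x3' \<ge> 0" by simp
      ultimately show ?thesis by linarith
    qed
    then show ?thesis unfolding \<mu>_def using sp[OF that] by simp
  qed
  have P1: "d' x1' (\<phi> x) = \<mu> x * d x1 x" if "x \<in> I" for x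
  proof -
    have "d' x1' (\<phi> x) * (d x1 x + k * d x x3) = (d' x1' (\<phi> x) + d' (\<phi> x) x3') * d x1 x"
      using R\<phi>[OF that] unfolding R_def by (simp add: algebra_simps)
    then show ?thesis unfolding \<mu>_def using sp[OF that] by (simp add: field_simps)
  qed
  have Q1: "d' (\<phi> x) x3' = \<mu> x * (k * d x x3)" if "x \<in> I" for x
  proof -
    have "d' (\<phi> x) x3' * (d x1 x + k * d x x3) = (d' x1' (\<phi> x) + d' (\<phi> x) x3') * (k * d x x3)"
      using R\<phi>[OF that] unfolding R_def by (simp add: algebra_simps)
    then show ?thesis unfolding \<mu>_def using sp[OF that] by (simp add: field_simps)
  qed
  have MF: "d' (\<phi> x) (\<phi> y) * D' = \<mu> x * \<mu> y * k * (d x y * D)" if "x \<in> I" "y \<in> I" for x y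
  proof -
    have "d' (\<phi> x) (\<phi> y) * D' = \<bar>d' x1' (\<phi> y) * d' (\<phi> x) x3' - d' x1' (\<phi> x) * d' (\<phi> y) x3'\<bar>"
      using B.ptol[OF \<phi>I[OF that(1)] \<phi>I[OF that(2)]] unfolding D'_def .
    also have "\<dots> = \<bar>\<mu> x * \<mu> y * k * (d x1 y * d x x3 - d x1 x * d y x3)\<bar>"
      using P1 Q1 that by (simp add: algebra_simps)
    also have "\<dots> = \<mu> x * \<mu> y * k * \<bar>d x1 y * d x x3 - d x1 x * d y x3\<bar>"
      using \<mu>p[OF that(1)] \<mu>p[OF that(2)] kp by (simp add: abs_mult)
    also have "\<dots> = \<mu> x * \<mu> y * k * (d x y * D)"
      using A.ptol[OF that] unfolding D_def by simp
    finally show ?thesis .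
  qed
  define K where "K x y = \<mu> x * \<mu> y * k * D / D'" for x y
  have MF2: "d' (\<phi> x) (\<phi> y) = K x y * d x y" if "x \<in> I" "y \<in> I" for x y
    using MF[OF that] Dp unfolding K_def by (simp add: field_simps)
  have Kp: "K x y > 0" if "x \<in> I" "y \<in> I" for x y
    unfolding K_def using \<mu>p that kp Dp by simp
  have inj: "inj_on \<phi> I"
  proof (rule inj_onI)
    fix x y assume "x \<in> I" "y \<in> I" "\<phi> x = \<phi> y"
    then have "d' (\<phi> x) (\<phi> y) = 0" using \<phi>I[OF \<open>y \<in> I\<close>] by simp
    then have "K x y * d x y = 0" using MF2[OF \<open>x \<in> I\<close> \<open>y \<in> I\<close>] by simp
    then show "x = y" using Kp[OF \<open>x \<in> I\<close> \<open>y \<in> I\<close>] \<open>x \<in> I\<close> \<open>y \<in> I\<close> by simp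
  qed
  have surj: "\<phi> ` I = I'"
  proof
    show "\<phi> ` I \<subseteq> I'" using \<phi>I by auto
    show "I' \<subseteq> \<phi> ` I"
    proof
      fix y assume y: "y \<in> I'"
      obtain x where x: "x \<in> I" "d x1 x * (d' y x3' / k) = d x x3 * d' x1' y"
        using A.ivt[of "d' x1' y" "d' y x3' / k"] kp by auto
      have "R x y" unfolding R_def using y x(2) kp by (simp add: field_simps)
      then show "y \<in> \<phi> ` I" using \<phi>eq[OF x(1)] x(1) by blast
    qed
  qed
  have moeb: "moebius I d I' d' \<phi>"
    unfolding moebius_def
  proof (intro conjI ballI impI)
    show "\<phi> ` I \<subseteq> I'" using surj by simp
    show "inj_on \<phi> I" by (rule inj)
    fix x y z w assume xyz: "x \<in> I" "y \<in> I" "z \<in> I" "w \<in> I" and adm: "admissible x y z w"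
    define t where "t = \<mu> x * \<mu> y * \<mu> z * \<mu> w * (k * D / D')^2"
    have tp: "t > 0" unfolding t_def using \<mu>p xyz kp Dp by simp
    have nz: "crt d x y z w \<noteq> (0,0,0)" by (rule crt_nz[OF A.ms xyz adm])
    have eqs: "crt d' (\<phi> x) (\<phi> y) (\<phi> z) (\<phi> w) =
       (t * fst (crt d x y z w), t * fst (snd (crt d x y z w)), t * snd (snd (crt d x y z w)))"
      unfolding crt_def t_def using xyz
      by (simp only: MF2 K_def L1 fst_conv snd_conv) (simp only: mult_ac)
    have "crt d' (\<phi> x) (\<phi> y) (\<phi> z) (\<phi> w) \<noteq> (0,0,0)"
      using nz tp unfolding eqs by (cases "crt d x y z w") auto
    then show "proj_eq (crt d x y z w) (crt d' (\<phi> x) (\<phi> y) (\<phi> z) (\<phi> w))"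
      unfolding proj_eq_def using nz tp eqs by (intro conjI exI[of _ t]) auto
  qed
  have f1: "\<phi> x1 = x1'" using \<phi>eq[of x1 x1'] a a' unfolding R_def by simp
  have f3: "\<phi> x3 = x3'" using \<phi>eq[of x3 x3'] a a' unfolding R_def by simp
  have f2: "\<phi> x2 = x2'"
  proof (rule \<phi>eq)
    show "x2 \<in> I" by (rule a)
    have "d x2 x3 * d' x1' x2' \<noteq> 0" using a a' by auto
    then show "R x2 x2'" unfolding R_def k_def using a' by (simp add: field_simps)
  qed
  obtain B1 where B1: "\<And>y. y \<in> I' \<Longrightarrow> d' x1' y \<le> B1" using B.bdd[OF a'(1)] by blast
  obtain B3 where B3: "\<And>y. y \<in> I' \<Longrightarrow> d' x3' y \<le> B3" using B.bdd[OF a'(2)] by blast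
  define m where "m = min 1 k"
  have mp: "m > 0" using kp by (simp add: m_def)
  define C where "C = (B1 + B3) / (m * D)"
  have C: "\<mu> x \<le> C" if x: "x \<in> I" for x
  proof -
    have N: "d' x1' (\<phi> x) + d' (\<phi> x) x3' \<le> B1 + B3"
      using B1[OF \<phi>I[OF x]] B3[OF \<phi>I[OF x]] by (simp add: B.commute)
    have "D \<le> d x1 x + d x x3" unfolding D_def using A.triangle a x by blast
    then have "m * D \<le> m * (d x1 x + d x x3)" using mp by (simp add: mult_left_mono)
    then have "m * D \<le> m * d x1 x + m * d x x3" by (simp add: distrib_left)
    also have "\<dots> \<le> d x1 x + k * d x x3"
      using mult_right_mono[of m 1 "d x1 x"] mult_right_mono[of m k "d x x3"] by (simp add: m_def)
    finally have s: "m * D \<le> d x1 x + k * d x x3" .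
    have B0: "0 \<le> B1 + B3" using N B.nonneg[of x1' "\<phi> x"] B.nonneg[of "\<phi> x" x3'] by linarith
    have mD: "0 < m * D" using mp Dp by simp
    show ?thesis unfolding \<mu>_def C_def
      using frac_le[OF B0 N mD s] .
  qed
  have Cp: "C > 0" using C[OF a(1)] \<mu>p[OF a(1)] by simp
  define L where "L = C * C * k * D / D'"
  have Lp: "L > 0" unfolding L_def using Cp kp Dp by simp
  have KL: "K x y \<le> L" if "x \<in> I" "y \<in> I" for x y
  proof -
    have "\<mu> x * \<mu> y \<le> C * C"
      using mult_mono[OF C[OF that(1)] C[OF that(2)]] \<mu>p[OF that(2)] Cp by simp
    then have k1: "\<mu> x * \<mu> y * k \<le> C * C * k" using kp by simp
    have "\<mu> x * \<mu> y * k * D \<le> C * C * k * D" using mult_right_mono[OF k1, of D] Dp by simp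
    then show ?thesis unfolding K_def L_def using Dp
      by (simp add: divide_right_mono)
  qed
  have contm: "continuous_map A.mtopology B.mtopology \<phi>"
    unfolding A.metric_continuous_map[OF B.ms]
  proof (intro conjI ballI allI impI)
    show "\<phi> ` I \<subseteq> I'" using surj by simp
    fix x e assume x: "x \<in> I" and e: "(0::real) < e"
    show "\<exists>\<delta>>0. \<forall>y. y \<in> I \<and> d x y < \<delta> \<longrightarrow> d' (\<phi> x) (\<phi> y) < e"
    proof (intro exI[of _ "e / L"] conjI allI impI)
      show "0 < e / L" using e Lp by simp
      fix y assume y: "y \<in> I \<and> d x y < e / L"
      have "d' (\<phi> x) (\<phi> y) = K x y * d x y" using MF2 x y by blast
      also have "\<dots> \<le> L * d x y" using KL[OF x] y by (simp add: mult_right_mono)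
      also have "\<dots> < e" using y Lp by (simp add: pos_less_divide_eq mult.commute)
      finally show "d' (\<phi> x) (\<phi> y) < e" .
    qed
  qed
  have homeo: "homeomorphic_map A.mtopology B.mtopology \<phi>"
  proof (rule continuous_imp_homeomorphic_map[OF contm])
    obtain lo hi where "I = {lo..hi}" using A.seg by blast
    then show "compact_space A.mtopology" unfolding A.topo
      by (simp add: compact_space_subtopology)
    show "Hausdorff_space B.mtopology" by (rule B.Hausdorff_space_mtopology)
    show "\<phi> ` topspace A.mtopology = topspace B.mtopology" using surj by simp
    show "inj_on \<phi> (topspace A.mtopology)" using inj by simp
  qed
  have uniq: "\<psi> x = \<phi> x" if m: "moebius I d I' d' \<psi>" and g: "\<psi> x1 = x1'" "\<psi> x2 = x2'" "\<psi> x3 = x3'"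
       and x: "x \<in> I" for \<psi> x
  proof -
    have "admissible x1 x x2 x3" unfolding admissible_def using a assms(4) by auto
    then have pe: "proj_eq (crt d x1 x x2 x3) (crt d' (\<psi> x1) (\<psi> x) (\<psi> x2) (\<psi> x3))"
      using m x a unfolding moebius_def by blast
    then obtain t where t: "d' x1' (\<psi> x) * d' x2' x3' = t * (d x1 x * d x2 x3)"
        "d' x1' x2' * d' (\<psi> x) x3' = t * (d x1 x2 * d x x3)"
      unfolding proj_eq_def crt_def using g by auto
    have psI: "\<psi> x \<in> I'" using m x unfolding moebius_def by auto
    have n0: "d x2 x3 \<noteq> 0" "d' x1' x2' \<noteq> 0" using a a' by auto
    have "R x (\<psi> x)" unfolding R_def k_def using psI
      L4[OF n0 t] by simp
    then show ?thesis using \<phi>eq[OF x] by simp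
  qed
  show ?thesis
  proof (rule exI[of _ \<phi>], intro conjI allI impI ballI)
    show "homeomorphic_map A.mtopology B.mtopology \<phi>" by (rule homeo)
    show "moebius I d I' d' \<phi>" by (rule moeb)
    show "\<phi> x1 = x1'" "\<phi> x2 = x2'" "\<phi> x3 = x3'" by (rule f1, rule f2, rule f3)
    fix \<psi> x
    assume h: "homeomorphic_map A.mtopology B.mtopology \<psi> \<and> moebius I d I' d' \<psi> \<and>
      \<psi> x1 = x1' \<and> \<psi> x2 = x2' \<and> \<psi> x3 = x3'" and x: "x \<in> I"
    show "\<psi> x = \<phi> x" using uniq[of \<psi> x] h x by blast
  qed
qed

end
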